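(* Let $(\mathbf a,b)\in\mathbb{Z}^2\times\mathbb{N}$ with $\gcd(\mathbf a,b)=1$ (i.e. $\gcd(a_1,a_2,b)=1$), and let $\boldsymbol\beta\in\mathbb{R}^2$. Then there is an absolute constant $C>0$ such that for all $0<\varepsilon<1$, $$\sum_{0\le h\le b-1}\mathbb 1\left[\left\|h\tfrac{\mathbf a}{b}+\boldsymbol\beta\right\|<\varepsilon\right]\le C(\varepsilon b+1),$$ and for all $N\ge1$ (and $0<\varepsilon<1$), $$\sum_{1\le h\le N}\mathbb 1\left[\left\|h\tfrac{\mathbf a}{b}\right\|<\varepsilon\right]\le C\left((\varepsilon b+1)\frac{N}{b}\mathbb 1[N\ge b]+\min\{N,\varepsilon b\}\mathbb 1[N<b]\right).$$
   Context: $\|\mathbf x\|$ denotes the distance from $\mathbf x\in\mathbb{R}^2$ to the nearest point of $\mathbb{Z}^2$ with respect to the maximum norm; $\mathbb 1[\cdot]$ is the indicator of a condition. *)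

theory Defs
  imports Complex_Main
begin

definition torus_norm :: "real \<times> real \<Rightarrow> real" where
  "torus_norm x = (INF z\<in>(UNIV :: (int \<times> int) set).
      max \<bar>fst x - of_int (fst z)\<bar> \<bar>snd x - of_int (snd z)\<bar>)"

definition ind :: "bool \<Rightarrow> real" where
  "ind P = (if P then 1 else 0)"

end

theory Submission imports Defs begin

lemma tn_iff: "torus_norm (x,y) < e \<longleftrightarrow> (\<exists>z1::int. \<exists>z2::int. \<bar>x - z1\<bar> < e \<and> \<bar>y - z2\<bar> < e)"
proof -
  have bdd: "bdd_below ((\<lambda>z::int\<times>int. max \<bar>x - of_int (fst z)\<bar> \<bar>y - of_int (snd z)\<bar>) ` UNIV)"
    by (rule bdd_belowI[where m=0]) auto
  show ?thesis unfolding torus_norm_def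
    by (simp add: cINF_less_iff[OF _ bdd])
qed

lemma sum_ind: "finite A \<Longrightarrow> (\<Sum>h\<in>A. ind (P h)) = real (card {h\<in>A. P h})"
proof -
  assume fin: "finite A"
  show ?thesis unfolding ind_def using sum.inter_filter[OF fin, of "\<lambda>_. 1::real" P] by simp
qed

lemma int_interval_card:
  fixes lo L :: real and R :: "int set"
  assumes "\<And>r. r \<in> R \<Longrightarrow> lo < r \<and> r < lo + L" "L > 0"
  shows "real (card R) \<le> L + 1"
proof -
  have "R \<subseteq> {\<lceil>lo\<rceil> .. \<lfloor>lo + L\<rfloor>}"
    using assms(1) by (auto simp: ceiling_le_iff le_floor_iff less_imp_le)
  hence "card R \<le> card {\<lceil>lo\<rceil> .. \<lfloor>lo + L\<rfloor>}" by (rule card_mono[OF finite_atLeastAtMost_int])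
  also have "\<dots> = nat (\<lfloor>lo + L\<rfloor> + 1 - \<lceil>lo\<rceil>)" by simp
  finally have "real (card R) \<le> real (nat (\<lfloor>lo + L\<rfloor> + 1 - \<lceil>lo\<rceil>))" by linarith
  also have "\<dots> \<le> L + 1"
  proof -
    have f1: "real_of_int \<lfloor>lo + L\<rfloor> \<le> lo + L" by simp
    have f2: "lo \<le> real_of_int \<lceil>lo\<rceil>" by simp
    show ?thesis
    proof (cases "\<lfloor>lo + L\<rfloor> + 1 - \<lceil>lo\<rceil> \<ge> 0")
      case True
      hence "real (nat (\<lfloor>lo + L\<rfloor> + 1 - \<lceil>lo\<rceil>)) = real_of_int (\<lfloor>lo + L\<rfloor> + 1 - \<lceil>lo\<rceil>)" by simp
      thus ?thesis using f1 f2 by linarith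
    next
      case False thus ?thesis using assms(2) by simp
    qed
  qed
  finally show ?thesis .
qed

lemma countA:
  fixes c :: int and m :: nat and \<beta> e :: real
  assumes m: "m \<ge> 1" and cop: "coprime c (int m)" and e: "e > 0"
  shows "real (card {q\<in>{0..<m}. \<exists>z::int. \<bar>real q * c / m + \<beta> - z\<bar> < e}) \<le> 2*e*m + 1"
proof -
  define Q where "Q = {q\<in>{0..<m}. \<exists>z::int. \<bar>real q * c / m + \<beta> - z\<bar> < e}"
  define zq where "zq q = (SOME z::int. \<bar>real q * c / m + \<beta> - z\<bar> < e)" for q
  define r where "r q = int q * c - int m * zq q" for q
  have mpos: "real m > 0" using m by simp
  have zq: "\<bar>real q * c / m + \<beta> - zq q\<bar> < e" if "q \<in> Q" for q
    using that unfolding Q_def zq_def by (auto intro: someI_ex)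
  have rb: "-m*\<beta> - e*m < r q \<and> r q < (-m*\<beta> - e*m) + 2*e*m" if "q \<in> Q" for q
  proof -
    have "\<bar>real q * c / m + \<beta> - zq q\<bar> * m < e * m" using zq[OF that] mpos by simp
    moreover have "\<bar>real q * c / m + \<beta> - zq q\<bar> * m = \<bar>real q * c + m * \<beta> - m * zq q\<bar>"
      using mpos by (simp add: abs_mult[symmetric] field_simps)
    ultimately have "\<bar>real_of_int (r q) + m * \<beta>\<bar> < e * m" unfolding r_def by (simp add: algebra_simps)
    thus ?thesis by (simp add: abs_less_iff algebra_simps)
  qed
  have inj: "inj_on r Q"
  proof
    fix q q' assume q: "q \<in> Q" and q': "q' \<in> Q" and eq: "r q = r q'"
    have "(int q - int q') * c = int m * (zq q - zq q')"
      using eq unfolding r_def by (simp add: algebra_simps)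
    hence "int m dvd (int q - int q') * c" by (metis dvd_triv_left)
    hence d: "int m dvd int q - int q'" using cop
      by (simp add: coprime_commute coprime_dvd_mult_left_iff)
    moreover have "q < m" "q' < m" using q q' unfolding Q_def by auto
    ultimately show "q = q'"
    proof -
      obtain k where k: "int q - int q' = int m * k" using d by blast
      have "k = 0"
      proof (rule ccontr)
        assume "k \<noteq> 0"
        hence "\<bar>int m * k\<bar> \<ge> int m" using mult_left_mono[of 1 "\<bar>k\<bar>" "int m"] by (simp add: abs_mult)
        thus False using k \<open>q < m\<close> \<open>q' < m\<close> by linarith
      qed
      thus ?thesis using k by simp
    qed
  qed
  have "real (card (r ` Q)) \<le> 2*e*m + 1"
    by (rule int_interval_card[where lo="-m*\<beta> - e*m"]) (use rb e mpos in auto)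
  thus ?thesis using card_image[OF inj] unfolding Q_def by simp
qed


lemma part1:
  fixes a1 a2 :: int and b :: nat and \<beta>1 \<beta>2 e :: real
  assumes b: "b \<ge> 1" and gg: "gcd (gcd a1 a2) (int b) = 1" and e: "0 < e" "e < 1"
  shows "real (card {h\<in>{0..<b}. \<exists>z1::int. \<exists>z2::int. \<bar>real h * a1 / b + \<beta>1 - z1\<bar> < e \<and> \<bar>real h * a2 / b + \<beta>2 - z2\<bar> < e}) \<le> 8*e*b+1"
proof -
  define S where "S = {h\<in>{0..<b}. \<exists>z1::int. \<exists>z2::int. \<bar>real h * a1 / b + \<beta>1 - z1\<bar> < e \<and> \<bar>real h * a2 / b + \<beta>2 - z2\<bar> < e}"
  define g where "g = nat (gcd a1 (int b))"
  have ig: "int g = gcd a1 (int b)" unfolding g_def by simp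
  have gpos: "g \<ge> 1" using b ig by (metis gcd_eq_0_iff int_ops(1) less_one not_less of_nat_eq_0_iff  not_one_le_zero)
  have gdvd: "g dvd b" using ig by (metis gcd_dvd2 int_dvd_int_iff)
  define m where "m = b div g"
  have bmg: "b = m * g" unfolding m_def using gdvd by simp
  have mpos: "m \<ge> 1" using bmg b by (cases m) auto
  define c1 where "c1 = a1 div int g"
  have a1c: "a1 = c1 * int g" unfolding c1_def using ig by simp
  have cop1: "coprime c1 (int m)"
  proof -
    have "coprime (a1 div gcd a1 (int b)) (int b div gcd a1 (int b))"
      by (rule div_gcd_coprime) (use b in auto)
    moreover have "int b div gcd a1 (int b) = int m" unfolding m_def using ig by (simp add: zdiv_int)
    ultimately show ?thesis unfolding c1_def using ig by simp
  qed
  have cop2: "coprime a2 (int g)"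
  proof -
    have "gcd a2 (gcd a1 (int b)) = gcd (gcd a1 a2) (int b)" by (simp add: ac_simps)
    thus ?thesis using gg ig by (simp add: coprime_iff_gcd_eq_1)
  qed
  define Q where "Q = {q\<in>{0..<m}. \<exists>z::int. \<bar>real q * c1 / m + \<beta>1 - z\<bar> < e}"
  define T where "T q = {t\<in>{0..<g}. \<exists>z::int. \<bar>real t * a2 / g + (real q * a2 / b + \<beta>2) - z\<bar> < e}" for q
  define f where "f h = (h mod m, h div m)" for h :: nat
  have rm: "real m > 0" and rg: "real g > 0" using mpos gpos by auto
  have inj: "inj_on f S" unfolding f_def
    by (rule inj_onI) (metis div_mod_decomp prod.inject)
  have img: "f ` S \<subseteq> Sigma Q T"
  proof
    fix p assume "p \<in> f ` S"
    then obtain h where h: "h \<in> S" and p: "p = (h mod m, h div m)" unfolding f_def by auto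
    define q where "q = h mod m"
    define t where "t = h div m"
    have hqt: "h = q + m * t" unfolding q_def t_def by simp
    have rh: "real h = real q + real m * real t" using hqt by simp
    obtain z1 z2 :: int where z1: "\<bar>real h * a1 / b + \<beta>1 - z1\<bar> < e" and z2: "\<bar>real h * a2 / b + \<beta>2 - z2\<bar> < e"
      using h unfolding S_def by auto
    have hb: "h < b" using h unfolding S_def by auto
    have e1: "real h * a1 / b = real q * c1 / m + real t * c1"
      unfolding rh a1c bmg using rm rg by (simp add: field_simps)
    have e2: "real h * a2 / b = real t * a2 / g + real q * a2 / b"
      unfolding rh bmg using rm rg by (simp add: field_simps)
    have "q < m" unfolding q_def using mpos by simp
    moreover have "t < g" unfolding t_def using hb bmg
      by (simp add: less_mult_imp_div_less mult.commute)
    moreover have w1: "\<bar>real q * c1 / m + \<beta>1 - real_of_int (z1 - int t * c1)\<bar> < e"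
      using z1 unfolding e1 by simp
    moreover have w2: "\<bar>real t * a2 / g + (real q * a2 / b + \<beta>2) - z2\<bar> < e"
      using z2 unfolding e2 by (simp add: algebra_simps)
    moreover have "\<exists>z::int. \<bar>real q * c1 / m + \<beta>1 - z\<bar> < e" by (rule exI, rule w1)
    moreover have "\<exists>z::int. \<bar>real t * a2 / g + (real q * a2 / b + \<beta>2) - z\<bar> < e" by (rule exI, rule w2)
    ultimately have "q \<in> Q" "t \<in> T q" unfolding Q_def T_def by auto
    thus "p \<in> Sigma Q T" unfolding p q_def t_def by simp
  qed
  have finQ: "finite Q" unfolding Q_def by simp
  have finT: "\<And>q. finite (T q)" unfolding T_def by simp
  have "card S \<le> card (Sigma Q T)"
    using card_inj_on_le[OF inj img] finQ finT by simp
  also have "card (Sigma Q T) = (\<Sum>q\<in>Q. card (T q))" using finQ finT by (simp add: card_SigmaI)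
  finally have c1le: "real (card S) \<le> (\<Sum>q\<in>Q. real (card (T q)))" by (simp flip: of_nat_sum)
  also have "\<dots> \<le> (\<Sum>q\<in>Q. 2*e*g+1)"
    by (rule sum_mono) (unfold T_def, rule countA[OF gpos cop2 e(1)])
  also have "\<dots> = real (card Q) * (2*e*g+1)" by simp
  also have "\<dots> \<le> (2*e*m+1) * (2*e*g+1)"
    by (rule mult_right_mono) (unfold Q_def, rule countA[OF mpos cop1 e(1)], use e in simp)
  also have "\<dots> = 4*(e*e)*(real m*real g) + 2*e*m + 2*e*g + 1" by (simp add: algebra_simps)
  also have "\<dots> \<le> 8*e*b+1"
  proof -
    have rb: "real b = real m * real g" using bmg by simp
    have "e*e \<le> e*1" using e by (intro mult_left_mono) auto
    hence "(e*e)*(real m*real g) \<le> e*(real m * real g)" using rm rg by (intro mult_right_mono) auto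
    moreover have "real m \<le> real b" "real g \<le> real b" using rb rm rg mpos gpos
      by (simp_all add: bmg)
    moreover have "e * real m \<le> e * real b" "e * real g \<le> e * real b"
      using calculation(2,3) e by (simp_all add: mult_left_mono)
    ultimately show ?thesis using rb by (simp add: algebra_simps)
  qed
  finally show ?thesis unfolding S_def .
qed


lemma part2_big:
  fixes a1 a2 :: int and b N :: nat and e :: real
  assumes b: "b \<ge> 1" and gg: "gcd (gcd a1 a2) (int b) = 1" and e: "0 < e" "e < 1" and N: "N \<ge> b"
  shows "real (card {h\<in>{1..N}. \<exists>z1::int. \<exists>z2::int. \<bar>real h * a1 / b - z1\<bar> < e \<and> \<bar>real h * a2 / b - z2\<bar> < e})
     \<le> 18 * ((e * b + 1) * (real N / b))"
proof -
  define S0 where "S0 = {h\<in>{0..<b}. \<exists>z1::int. \<exists>z2::int. \<bar>real h * a1 / b + 0 - z1\<bar> < e \<and> \<bar>real h * a2 / b + 0 - z2\<bar> < e}"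
  define S where "S = {h\<in>{1..N}. \<exists>z1::int. \<exists>z2::int. \<bar>real h * a1 / b - z1\<bar> < e \<and> \<bar>real h * a2 / b - z2\<bar> < e}"
  have c0: "real (card S0) \<le> 8*e*b+1" unfolding S0_def by (rule part1[OF b gg e])
  define f where "f h = (h mod b, h div b)" for h :: nat
  have rb: "real b > 0" using b by simp
  have inj: "inj_on f S" unfolding f_def
    by (rule inj_onI) (metis div_mod_decomp prod.inject)
  have img: "f ` S \<subseteq> S0 \<times> {0..N div b}"
  proof
    fix p assume "p \<in> f ` S"
    then obtain h where h: "h \<in> S" and p: "p = (h mod b, h div b)" unfolding f_def by auto
    define q where "q = h mod b"
    define t where "t = h div b"
    have rh: "real h = real q + real b * real t" unfolding q_def t_def
      by (metis mod_div_decomp of_nat_add of_nat_mult add.commute mult.commute)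
    obtain z1 z2 :: int where z1: "\<bar>real h * a1 / b - z1\<bar> < e" and z2: "\<bar>real h * a2 / b - z2\<bar> < e"
      using h unfolding S_def by auto
    have hN: "h \<le> N" using h unfolding S_def by auto
    have e1: "real h * a1 / b = real q * a1 / b + real t * a1"
      unfolding rh using rb by (simp add: field_simps)
    have e2: "real h * a2 / b = real q * a2 / b + real t * a2"
      unfolding rh using rb by (simp add: field_simps)
    have w1: "\<bar>real q * a1 / b + 0 - real_of_int (z1 - int t * a1)\<bar> < e"
      using z1 unfolding e1 by simp
    have w2: "\<bar>real q * a2 / b + 0 - real_of_int (z2 - int t * a2)\<bar> < e"
      using z2 unfolding e2 by simp
    have "q < b" unfolding q_def using b by simp
    moreover have "\<exists>z1::int. \<exists>z2::int. \<bar>real q * a1 / b + 0 - z1\<bar> < e \<and> \<bar>real q * a2 / b + 0 - z2\<bar> < e"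
      using w1 w2 by blast
    ultimately have "q \<in> S0" unfolding S0_def by auto
    moreover have "t \<le> N div b" unfolding t_def using hN by (simp add: div_le_mono)
    ultimately show "p \<in> S0 \<times> {0..N div b}" unfolding p q_def t_def by simp
  qed
  have "card S \<le> card (S0 \<times> {0..N div b})"
    using card_inj_on_le[OF inj img] unfolding S0_def by simp
  hence "card S \<le> card S0 * (N div b + 1)" by (simp add: card_cartesian_product)
  hence "real (card S) \<le> real (card S0 * (N div b + 1))" by (simp only: of_nat_le_iff)
  hence "real (card S) \<le> real (card S0) * (real (N div b) + 1)" by (simp add: algebra_simps)
  also have "\<dots> \<le> (8*e*b+1) * (2 * (real N / b))"
  proof (rule mult_mono)
    have "real (N div b) \<le> real N / b" by (rule of_nat_div_le_of_nat)
    moreover have "1 \<le> real N / b" using N rb by simp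
    ultimately show "real (N div b) + 1 \<le> 2 * (real N / b)" by simp
  qed (use c0 in auto)
  also have "\<dots> \<le> 18 * ((e * b + 1) * (real N / b))"
  proof -
    have "0 \<le> real N / b" by simp
    moreover have "2 * (8*e*b+1) \<le> 18 * (e*b+1)" using e rb by simp
    ultimately have "(2 * (8*e*b+1)) * (real N / b) \<le> (18 * (e*b+1)) * (real N / b)"
      by (intro mult_right_mono)
    moreover have "(8*e*b+1) * (2 * (real N / b)) = (2 * (8*e*b+1)) * (real N / b)" by simp
    moreover have "18 * ((e * b + 1) * (real N / b)) = (18 * (e*b+1)) * (real N / b)" by simp
    ultimately show ?thesis by linarith
  qed
  finally show ?thesis unfolding S_def .
qed

lemma part2_small:
  fixes a1 a2 :: int and b N :: nat and e :: real
  assumes b: "b \<ge> 1" and gg: "gcd (gcd a1 a2) (int b) = 1" and e: "0 < e" "e < 1" and N: "N < b" "N \<ge> 1"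
  shows "real (card {h\<in>{1..N}. \<exists>z1::int. \<exists>z2::int. \<bar>real h * a1 / b - z1\<bar> < e \<and> \<bar>real h * a2 / b - z2\<bar> < e})
     \<le> 18 * min (real N) (e * b)"
proof -
  define S where "S = {h\<in>{1..N}. \<exists>z1::int. \<exists>z2::int. \<bar>real h * a1 / b - z1\<bar> < e \<and> \<bar>real h * a2 / b - z2\<bar> < e}"
  define S0 where "S0 = {h\<in>{0..<b}. \<exists>z1::int. \<exists>z2::int. \<bar>real h * a1 / b + 0 - z1\<bar> < e \<and> \<bar>real h * a2 / b + 0 - z2\<bar> < e}"
  have rb: "real b > 0" using b by simp
  have cN: "card S \<le> N"
  proof -
    have "card S \<le> card {1..N}" unfolding S_def by (rule card_mono) auto
    thus ?thesis by simp
  qed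
  have "S \<subseteq> S0" unfolding S_def S0_def using N by auto
  hence "card S \<le> card S0" unfolding S0_def by (intro card_mono) auto
  moreover have c0: "real (card S0) \<le> 8*e*b+1" unfolding S0_def by (rule part1[OF b gg e])
  ultimately have cS: "real (card S) \<le> 8*e*b+1" by linarith
  have "real (card S) \<le> 18 * min (real N) (e * b)"
  proof (cases "e * b < 1")
    case True
    have "S = {}"
    proof (rule ccontr)
      assume "S \<noteq> {}"
      then obtain h z1 z2 where h: "1 \<le> h" "h \<le> N" and z1: "\<bar>real h * a1 / b - real_of_int z1\<bar> < e"
        and z2: "\<bar>real h * a2 / b - real_of_int z2\<bar> < e" unfolding S_def by auto
      have key: "int b dvd int h * a" if z: "\<bar>real h * a / b - real_of_int z\<bar> < e" for a z
      proof -
        have "\<bar>real h * a / b - real_of_int z\<bar> * b < e * b" using z rb by simp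
        moreover have "\<bar>real h * a / b - real_of_int z\<bar> * b = \<bar>real_of_int (int h * a - int b * z)\<bar>"
          using rb by (simp add: abs_mult[symmetric] field_simps)
        ultimately have "\<bar>real_of_int (int h * a - int b * z)\<bar> < 1" using True by linarith
        hence "\<bar>int h * a - int b * z\<bar> < 1" by linarith
        hence "int h * a = int b * z" by simp
        thus ?thesis by simp
      qed
      have "int b dvd gcd (int h * a1) (int h * a2)" using key[OF z1] key[OF z2] by simp
      hence "int b dvd int h * gcd a1 a2" using gcd_mult_distrib_int[of "int h" a1 a2] by simp
      moreover have "coprime (int b) (gcd a1 a2)" using gg by (simp add: coprime_iff_gcd_eq_1 gcd.commute)
      ultimately have "int b dvd int h" by (simp add: coprime_dvd_mult_left_iff)
      hence "b dvd h" by simp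
      thus False using h N by (meson dvd_imp_le le_trans not_le less_le_trans zero_less_one)
    qed
    thus ?thesis using e rb by simp
  next
    case False
    have "real (card S) \<le> 18 * real N" using cN by simp
    moreover have "real (card S) \<le> 18 * (e * b)" using cS False by linarith
    ultimately show ?thesis by simp
  qed
  thus ?thesis unfolding S_def .
qed


theorem lemma4p2:
  shows "\<exists>C>0. \<forall>(a1::int) (a2::int) (b::nat) (\<beta>1::real) (\<beta>2::real) (\<epsilon>::real).
     b \<ge> 1 \<longrightarrow> gcd (gcd a1 a2) (int b) = 1 \<longrightarrow> 0 < \<epsilon> \<longrightarrow> \<epsilon> < 1 \<longrightarrow>
       (\<Sum>h\<in>{0..<b}. ind (torus_norm (real h * a1 / b + \<beta>1, real h * a2 / b + \<beta>2) < \<epsilon>))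
          \<le> C * (\<epsilon> * b + 1)
     \<and> (\<forall>N::nat. N \<ge> 1 \<longrightarrow>
       (\<Sum>h\<in>{1..N}. ind (torus_norm (real h * a1 / b, real h * a2 / b) < \<epsilon>))
          \<le> C * ((\<epsilon> * b + 1) * (real N / b) * ind (N \<ge> b)
                 + min (real N) (\<epsilon> * b) * ind (N < b)))"
proof (rule exI[of _ 18], intro conjI allI impI)
  show "(0::real) < 18" by simp
next
  fix a1 a2 :: int and b :: nat and \<beta>1 \<beta>2 e :: real
  assume b: "b \<ge> 1" and gg: "gcd (gcd a1 a2) (int b) = 1" and e0: "0 < e" and e1: "e < 1"
  have "(\<Sum>h\<in>{0..<b}. ind (torus_norm (real h * a1 / b + \<beta>1, real h * a2 / b + \<beta>2) < e))
     = real (card {h\<in>{0..<b}. \<exists>z1::int. \<exists>z2::int. \<bar>real h * a1 / b + \<beta>1 - z1\<bar> < e \<and> \<bar>real h * a2 / b + \<beta>2 - z2\<bar> < e})"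
    by (simp add: sum_ind tn_iff)
  also have "\<dots> \<le> 8*e*b+1" by (rule part1[OF b gg e0 e1])
  also have "\<dots> \<le> 18 * (e * b + 1)" using e0 by simp
  finally show "(\<Sum>h\<in>{0..<b}. ind (torus_norm (real h * a1 / b + \<beta>1, real h * a2 / b + \<beta>2) < e)) \<le> 18 * (e * b + 1)" .
next
  fix a1 a2 :: int and b :: nat and \<beta>1 \<beta>2 e :: real and N :: nat
  assume b: "b \<ge> 1" and gg: "gcd (gcd a1 a2) (int b) = 1" and e0: "0 < e" and e1: "e < 1" and N: "N \<ge> 1"
  have eq: "(\<Sum>h\<in>{1..N}. ind (torus_norm (real h * a1 / b, real h * a2 / b) < e))
     = real (card {h\<in>{1..N}. \<exists>z1::int. \<exists>z2::int. \<bar>real h * a1 / b - z1\<bar> < e \<and> \<bar>real h * a2 / b - z2\<bar> < e})"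
    by (simp add: sum_ind tn_iff)
  show "(\<Sum>h\<in>{1..N}. ind (torus_norm (real h * a1 / b, real h * a2 / b) < e))
          \<le> 18 * ((e * b + 1) * (real N / b) * ind (N \<ge> b) + min (real N) (e * b) * ind (N < b))"
  proof (cases "N \<ge> b")
    case True
    thus ?thesis unfolding eq using part2_big[OF b gg e0 e1 True] by (simp add: ind_def)
  next
    case False
    hence "N < b" by simp
    thus ?thesis unfolding eq using part2_small[OF b gg e0 e1 _ N] by (simp add: ind_def)
  qed
qed

end
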